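(* Let $d\ge3$, let $(O_1,\dots,O_n)\in SO(d)^n$ and $(r_1,\dots,r_n)\in(0,\infty)^n$, and let $\Gamma=\langle\{r_iO_i,\ r_i^{-1}O_i^{-1}: 1\le i\le n\}\rangle\le CO(d)$. Suppose that (1) $\langle\{O_i,O_i^{-1}:1\le i\le n\}\rangle=SO(d)$; (2) $\langle\{\log r_i,-\log r_i:1\le i\le n\}\rangle=\mathbb{R}$ (in the additive group $\mathbb{R}$); (3) $rI\in\Gamma$ for some $r>0$ with $r\ne1$. Then $\Gamma=CO(d)$.
   Context: $CO(d)=\{rO:r>0,O\in SO(d)\}$. For a subset $\mathcal A$ of a topological group, $\langle\mathcal A\rangle$ is the closure of $\{A_1\cdots A_n:n\ge1,A_i\in\mathcal A\}$ (with the group operation, addition in $\mathbb{R}$). *)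

theory Defs
  imports "HOL-Analysis.Analysis"
begin

definition SO :: "(real^'n^'n) set" where
  "SO = {Q. orthogonal_matrix Q \<and> det Q = 1}"

definition CO :: "(real^'n^'n) set" where
  "CO = {r *\<^sub>R Q | r Q. r > 0 \<and> Q \<in> SO}"

definition mgen :: "(real^'n^'n) set \<Rightarrow> (real^'n^'n) set \<Rightarrow> (real^'n^'n) set" where
  "mgen G A = G \<inter> closure {foldr (**) xs (mat 1) | xs. xs \<noteq> [] \<and> set xs \<subseteq> A}"

definition agen :: "real set \<Rightarrow> real set" where
  "agen A = closure {sum_list xs | xs. xs \<noteq> [] \<and> set xs \<subseteq> A}"

end

theory Submission
  imports Defs
begin
definition hrefl :: "real^'n \<Rightarrow> real^'n^'n" where
  "hrefl v = mat 1 - (2 / (v \<bullet> v)) *\<^sub>R (\<chi> i j. v$i * v$j)"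

lemma outer_apply: "(\<chi> i j. v$i * v$j) *v y = (v \<bullet> y) *\<^sub>R (v::real^'n)"
  by (simp add: vec_eq_iff matrix_vector_mult_def inner_vec_def sum_distrib_left sum_distrib_right mult_ac)

lemma hrefl_apply: "hrefl v *v y = y - (2 * (v \<bullet> y) / (v \<bullet> v)) *\<^sub>R v"
  by (simp add: hrefl_def matrix_vector_mult_diff_rdistrib scaleR_matrix_vector_assoc[symmetric] outer_apply)

lemma hrefl_zero [simp]: "hrefl 0 = mat 1"
  by (simp add: hrefl_def)

lemma hrefl_scale: "c \<noteq> 0 \<Longrightarrow> hrefl (c *\<^sub>R v) = hrefl v"
  unfolding matrix_eq hrefl_apply
  by (auto simp: inner_scaleR_left inner_scaleR_right field_simps)

lemma hrefl_sym [simp]: "transpose (hrefl v) = hrefl v"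
  by (simp add: hrefl_def transpose_def vec_eq_iff mat_def mult.commute)

lemma hrefl_invol [simp]: "hrefl v ** hrefl v = mat 1"
proof (cases "v = 0")
  case False
  then have "v \<bullet> v \<noteq> 0" by simp
  then show ?thesis
    unfolding matrix_eq matrix_vector_mul_assoc[symmetric] hrefl_apply
    by (auto simp: inner_diff_right inner_scaleR_right algebra_simps)
qed simp

lemma hrefl_invol2 [simp]: "hrefl v ** (hrefl v ** M) = M"
  by (simp add: matrix_mul_assoc)

lemma hrefl_orth [simp]: "orthogonal_matrix (hrefl v)"
  by (simp add: orthogonal_matrix_def)

lemma orth_inner:
  assumes "orthogonal_matrix (Q::real^'n^'n)"
  shows "(Q *v a) \<bullet> (Q *v b) = a \<bullet> b"
proof -
  have "(Q *v a) \<bullet> (Q *v b) = ((Q *v a) v* Q) \<bullet> b"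
    by (simp add: dot_lmul_matrix)
  also have "(Q *v a) v* Q = (transpose Q ** Q) *v a"
    by (simp add: matrix_vector_mul_assoc[symmetric])
  also have "\<dots> = a" using assms by (simp add: orthogonal_matrix_def)
  finally show ?thesis .
qed

lemma hrefl_conj: "hrefl x ** hrefl v ** hrefl x = hrefl (hrefl x *v v)"
proof -
  have inn: "(hrefl x *v a) \<bullet> (hrefl x *v b) = a \<bullet> b" for a b
    by (rule orth_inner) simp
  have sym: "v \<bullet> (hrefl x *v y) = (hrefl x *v v) \<bullet> y" for y
    by (simp add: hrefl_apply inner_diff_right inner_diff_left inner_scaleR_right inner_scaleR_left inner_commute)
  show ?thesis
    unfolding matrix_eq matrix_vector_mul_assoc[symmetric]
  proof
    fix y
    have "hrefl x *v (hrefl v *v (hrefl x *v y))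
       = hrefl x *v (hrefl x *v y) - (2 * (v \<bullet> (hrefl x *v y)) / (v \<bullet> v)) *\<^sub>R (hrefl x *v v)"
      by (subst hrefl_apply[of v]) (simp only: matrix_vector_mult_diff_distrib matrix_vector_mult_scaleR)
    also have "hrefl x *v (hrefl x *v y) = y"
      by (simp add: matrix_vector_mul_assoc)
    also have "y - (2 * (v \<bullet> (hrefl x *v y)) / (v \<bullet> v)) *\<^sub>R (hrefl x *v v) = hrefl (hrefl x *v v) *v y"
      by (subst hrefl_apply[of "hrefl x *v v" y]) (simp only: sym inn)
    finally show "hrefl x *v (hrefl v *v (hrefl x *v y)) = hrefl (hrefl x *v v) *v y" .
  qed
qed

lemma hrefl_swap:
  assumes "norm a = norm (b::real^'n)"
  shows "hrefl (a - b) *v b = a"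
proof (cases "a = b")
  case False
  have aa: "a \<bullet> a = b \<bullet> b" using assms by (simp add: dot_square_norm)
  have xb: "(a - b) \<bullet> b = a \<bullet> b - b \<bullet> b" by (simp add: inner_diff_left)
  have xx: "(a - b) \<bullet> (a - b) = 2 * (b \<bullet> b - a \<bullet> b)"
    using aa by (simp add: inner_diff_left inner_diff_right inner_commute)
  moreover have "(a - b) \<bullet> (a - b) \<noteq> 0" using False by simp
  ultimately have nz: "b \<bullet> b - a \<bullet> b \<noteq> 0" by simp
  have "2 * ((a - b) \<bullet> b) / ((a - b) \<bullet> (a - b)) = -1"
    unfolding xb xx using nz by (simp add: field_simps)
  then show ?thesis by (simp add: hrefl_apply)
qed simp

lemma hrefl_half:
  assumes "norm u = norm (v::real^'n)"
  shows "hrefl (u + v) *v u = - v"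
proof (cases "u + v = 0")
  case True
  then show ?thesis by (simp add: eq_neg_iff_add_eq_0)
next
  case False
  have aa: "u \<bullet> u = v \<bullet> v" using assms by (simp add: dot_square_norm)
  have xx: "(u + v) \<bullet> (u + v) = 2 * ((u + v) \<bullet> u)"
    using aa by (simp add: inner_add_left inner_add_right inner_commute)
  moreover have "(u + v) \<bullet> (u + v) \<noteq> 0" using False by simp
  ultimately have nz: "(u + v) \<bullet> u \<noteq> 0" by (metis mult_zero_right)
  have "2 * ((u + v) \<bullet> u) / ((u + v) \<bullet> (u + v)) = 1"
    unfolding xx using nz by simp
  then have "hrefl (u + v) *v u = u - 1 *\<^sub>R (u + v)" by (simp only: hrefl_apply)
  then show ?thesis by simp
qed

lemma hrefl_neg: "hrefl (- v) = hrefl v"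
  using hrefl_scale[of "-1" v] by simp

lemma hrefl_comm:
  assumes "u \<bullet> w = 0"
  shows "hrefl u ** hrefl w = hrefl w ** hrefl u"
  unfolding matrix_eq matrix_vector_mul_assoc[symmetric]
  using assms
  by (simp add: hrefl_apply inner_diff_right inner_scaleR_right inner_commute algebra_simps)

lemma hrefl_axis_comp:
  "hrefl (axis k 1 :: real^'n) $ i $ j = (if i = j then (if i = k then -1 else 1) else 0)"
proof -
  have e: "(axis k 1::real^'n) \<bullet> axis k 1 = 1" by (simp add: inner_axis_axis)
  show ?thesis unfolding hrefl_def e by (simp add: mat_def axis_def)
qed

lemma det_hrefl_axis: "det (hrefl (axis k 1 :: real^'n)) = -1"
proof -
  have "det (hrefl (axis k 1 :: real^'n)) = (\<Prod>i\<in>UNIV. hrefl (axis k 1 :: real^'n) $ i $ i)"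
    by (rule det_diagonal) (simp add: hrefl_axis_comp)
  also have "\<dots> = (\<Prod>i\<in>UNIV. if i = k then -1 else 1)"
    by (rule prod.cong) (auto simp: hrefl_axis_comp)
  also have "\<dots> = -1"
    by (simp add: prod.If_cases)
  finally show ?thesis .
qed

lemma det_hrefl:
  assumes "v \<noteq> 0"
  shows "det (hrefl (v::real^'n)) = -1"
proof -
  obtain k :: 'n where True by simp
  define e where "e = norm v *\<^sub>R (axis k 1 :: real^'n)"
  have ne: "norm v = norm e" by (simp add: e_def)
  have "hrefl (v - e) *v e = v" by (rule hrefl_swap[OF ne])
  then have "hrefl v = hrefl (v - e) ** hrefl e ** hrefl (v - e)"
    by (simp add: hrefl_conj)
  moreover have "hrefl e = hrefl (axis k 1 :: real^'n)"
    using assms by (simp add: e_def hrefl_scale)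
  moreover have "det (hrefl (v - e)) * det (hrefl (v - e)) = 1"
    by (metis det_I det_mul hrefl_invol)
  ultimately show ?thesis
    by (simp add: det_mul det_hrefl_axis)
qed


definition rprod :: "(real^'n) list \<Rightarrow> real^'n^'n" where
  "rprod xs = foldr (\<lambda>x M. hrefl x ** M) xs (mat 1)"

lemma rprod_Cons [simp]: "rprod (x # xs) = hrefl x ** rprod xs"
  by (simp add: rprod_def)
lemma rprod_Nil [simp]: "rprod [] = mat 1"
  by (simp add: rprod_def)

lemma matrix_eq_axis:
  fixes A B :: "real^'n^'n"
  assumes "\<And>j. A *v axis j 1 = B *v axis j 1"
  shows "A = B"
proof -
  have "column j A = column j B" for j using assms by (simp add: matrix_vector_mult_basis)
  then show ?thesis by (simp add: vec_eq_iff column_def)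
qed

lemma cd_aux:
  fixes Q :: "real^'n^'n"
  assumes "finite F" "orthogonal_matrix Q" "\<forall>j. j \<notin> F \<longrightarrow> Q *v axis j 1 = axis j 1"
  shows "\<exists>xs. Q = rprod xs"
  using assms
proof (induction F arbitrary: Q rule: finite_induct)
  case empty
  then have "Q = mat 1" by (intro matrix_eq_axis) simp
  then show ?case by (metis rprod_Nil)
next
  case (insert k F)
  define q where "q = Q *v axis k 1"
  define x where "x = axis k 1 - q"
  have qq: "q \<bullet> q = 1" unfolding q_def using orth_inner[OF insert.prems(1)]
    by (simp add: inner_axis_axis)
  then have nq: "norm (axis k 1 :: real^'n) = norm q" by (simp add: norm_eq_sqrt_inner)
  define Q' where "Q' = hrefl x ** Q"
  have oQ': "orthogonal_matrix Q'" unfolding Q'_def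
    by (rule orthogonal_matrix_mul) (simp_all add: insert.prems)
  have fixk: "Q' *v axis k 1 = axis k 1"
    unfolding Q'_def matrix_vector_mul_assoc[symmetric] q_def[symmetric] x_def
    by (rule hrefl_swap[OF nq])
  have fixj: "Q' *v axis j 1 = axis j 1" if "j \<notin> insert k F" for j
  proof -
    have Qj: "Q *v axis j 1 = axis j 1" using that insert.prems by auto
    have jk: "j \<noteq> k" using that by auto
    have "q \<bullet> axis j 1 = axis k 1 \<bullet> (axis j 1 :: real^'n)"
      unfolding q_def using orth_inner[OF insert.prems(1), of "axis k 1" "axis j 1"] Qj by simp
    then have "x \<bullet> axis j 1 = 0" using jk by (simp add: x_def inner_diff_left inner_axis_axis)
    then show ?thesis
      unfolding Q'_def matrix_vector_mul_assoc[symmetric] Qj by (simp add: hrefl_apply)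
  qed
  have "\<forall>j. j \<notin> F \<longrightarrow> Q' *v axis j 1 = axis j 1"
    using fixk fixj by (metis insert_iff)
  then obtain xs where "Q' = rprod xs" using insert.IH oQ' by blast
  moreover have "Q = hrefl x ** Q'"
    unfolding Q'_def matrix_mul_assoc by simp
  ultimately have "Q = rprod (x # xs)" by simp
  then show ?case by blast
qed

lemma cd_decomp:
  fixes Q :: "real^'n^'n"
  assumes "orthogonal_matrix Q"
  shows "\<exists>xs. Q = rprod xs"
  using cd_aux[of UNIV Q] assms by simp

lemma commutator_refl:
  fixes G :: "(real^'n^'n) set"
  assumes card: "CARD('n) \<ge> 3"
    and comm: "\<And>A B. orthogonal_matrix A \<Longrightarrow> det A = 1 \<Longrightarrow> orthogonal_matrix B \<Longrightarrow> det B = 1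
       \<Longrightarrow> A ** B ** transpose A ** transpose B \<in> G"
    and one: "mat 1 \<in> G"
    and u: "u \<noteq> 0" and v: "v \<noteq> 0"
  shows "hrefl u ** hrefl v \<in> G"
proof -
  define v' where "v' = (norm u / norm v) *\<^sub>R v"
  have hv: "hrefl v' = hrefl v" unfolding v'_def using u v by (simp add: hrefl_scale)
  have nv: "norm u = norm v'" unfolding v'_def using v by simp
  define b where "b = u + v'"
  show ?thesis
  proof (cases "b = 0")
    case True
    then have "v' = - u" unfolding b_def by (simp add: eq_neg_iff_add_eq_0 add.commute)
    then have "hrefl v = hrefl u" using hv hrefl_neg by metis
    then show ?thesis using one by simp
  next
    case False
    have "dim {u, b} \<le> card {u, b}" by (rule dim_le_card') simp
    also have "\<dots> \<le> 2" by (simp add: card_insert_if)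
    also have "\<dots> < DIM(real^'n)" using card by simp
    finally obtain w where w: "w \<noteq> 0" "\<And>y. y \<in> span {u, b} \<Longrightarrow> orthogonal w y"
      using orthogonal_to_subspace_exists by blast
    have wu: "u \<bullet> w = 0" using w(2)[of u] by (simp add: span_base orthogonal_def inner_commute)
    have wb: "b \<bullet> w = 0" using w(2)[of b] by (simp add: span_base orthogonal_def inner_commute)
    define A where "A = hrefl u ** hrefl w"
    define B where "B = hrefl b ** hrefl w"
    have oA: "orthogonal_matrix A" "det A = 1" unfolding A_def
      using u w(1) by (simp_all add: orthogonal_matrix_mul det_mul det_hrefl)
    have oB: "orthogonal_matrix B" "det B = 1" unfolding B_def
      using False w(1) by (simp_all add: orthogonal_matrix_mul det_mul det_hrefl)
    have c1: "hrefl w *v (hrefl w *v z) = z" for z by (simp add: matrix_vector_mul_assoc)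
    have c2: "hrefl w *v (hrefl u *v z) = hrefl u *v (hrefl w *v z)" for z
      using hrefl_comm[OF wu] by (metis matrix_vector_mul_assoc)
    have c3: "hrefl w *v (hrefl b *v z) = hrefl b *v (hrefl w *v z)" for z
      using hrefl_comm[OF wb] by (metis matrix_vector_mul_assoc)
    have "A ** B ** transpose A ** transpose B = hrefl u ** hrefl b ** hrefl u ** hrefl b"
      unfolding matrix_eq
    proof
      fix y
      show "(A ** B ** transpose A ** transpose B) *v y = (hrefl u ** hrefl b ** hrefl u ** hrefl b) *v y"
        unfolding A_def B_def matrix_transpose_mul hrefl_sym matrix_vector_mul_assoc[symmetric]
        by (simp add: c1 c2 c3)
    qed
    also have "\<dots> = hrefl u ** (hrefl b ** hrefl u ** hrefl b)"
      by (simp add: matrix_mul_assoc)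
    also have "hrefl b ** hrefl u ** hrefl b = hrefl v"
      unfolding hrefl_conj b_def hrefl_half[OF nv] hrefl_neg hv ..
    finally show ?thesis using comm[OF oA oB] by simp
  qed
qed

lemma parity:
  fixes G :: "(real^'n^'n) set"
  assumes mul: "\<And>A B. A \<in> G \<Longrightarrow> B \<in> G \<Longrightarrow> A ** B \<in> G"
    and one: "mat 1 \<in> G"
    and rr: "\<And>u v. u \<noteq> 0 \<Longrightarrow> v \<noteq> 0 \<Longrightarrow> hrefl u ** hrefl v \<in> G"
    and e: "e \<noteq> 0"
  shows "rprod xs \<in> G \<or> hrefl e ** rprod xs \<in> G"
proof (induction xs)
  case Nil
  then show ?case using one by simp
next
  case (Cons x xs)
  show ?case
  proof (cases "x = 0")
    case True
    then show ?thesis using Cons by simp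
  next
    case False
    from Cons consider "rprod xs \<in> G" | "hrefl e ** rprod xs \<in> G" by blast
    then show ?thesis
    proof cases
      case 1
      have "hrefl e ** rprod (x # xs) = (hrefl e ** hrefl x) ** rprod xs"
        by (simp add: matrix_mul_assoc)
      then show ?thesis using mul[OF rr[OF e False] 1] by simp
    next
      case 2
      have "rprod (x # xs) = (hrefl x ** hrefl e) ** (hrefl e ** rprod xs)"
        by (simp add: matrix_mul_assoc[symmetric] hrefl_invol2)
      then show ?thesis using mul[OF rr[OF False e] 2] by simp
    qed
  qed
qed




lemma tendsto_mmult:
  fixes f g :: "'a \<Rightarrow> real^'n^'n"
  assumes "(f \<longlongrightarrow> a) F" "(g \<longlongrightarrow> b) F"
  shows "((\<lambda>x. f x ** g x) \<longlongrightarrow> a ** b) F"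
  unfolding matrix_matrix_mult_def
  apply (rule vec_tendstoI)
  apply simp
  apply (rule vec_tendstoI)
  apply simp
  apply (intro tendsto_sum tendsto_mult tendsto_vec_nth assms)
  done

lemma tendsto_transpose:
  fixes f :: "'a \<Rightarrow> real^'n^'n"
  assumes "(f \<longlongrightarrow> a) F"
  shows "((\<lambda>x. transpose (f x)) \<longlongrightarrow> transpose a) F"
  unfolding transpose_def
  apply (rule vec_tendstoI)
  apply simp
  apply (rule vec_tendstoI)
  apply simp
  apply (intro tendsto_vec_nth assms)
  done

lemma tendsto_det:
  fixes f :: "'a \<Rightarrow> real^'n^'n"
  assumes "(f \<longlongrightarrow> a) F"
  shows "((\<lambda>x. det (f x)) \<longlongrightarrow> det a) F"
  unfolding det_def
  by (intro tendsto_sum tendsto_mult tendsto_const tendsto_prod tendsto_vec_nth assms)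



lemma closure_mul:
  fixes S :: "(real^'n^'n) set"
  assumes mul: "\<And>a b. a \<in> S \<Longrightarrow> b \<in> S \<Longrightarrow> a ** b \<in> S"
    and x: "x \<in> closure S" and y: "y \<in> closure S"
  shows "x ** y \<in> closure S"
proof -
  from x obtain f where f: "\<forall>n. f n \<in> S" "f \<longlonglongrightarrow> x" by (auto simp: closure_sequential)
  from y obtain g where g: "\<forall>n. g n \<in> S" "g \<longlonglongrightarrow> y" by (auto simp: closure_sequential)
  have "\<forall>n. f n ** g n \<in> S" using f g mul by blast
  moreover have "(\<lambda>n. f n ** g n) \<longlonglongrightarrow> x ** y" by (intro tendsto_mmult f g)
  ultimately show ?thesis unfolding closure_sequential by (intro exI[of _ "\<lambda>n. f n ** g n"]) simp
qed


lemma orth_matrix_inv: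
  assumes "orthogonal_matrix (Q::real^'n^'n)"
  shows "matrix_inv Q = transpose Q"
proof -
  have ex: "\<exists>A'. Q ** A' = mat 1 \<and> A' ** Q = mat 1"
    using assms by (auto simp: orthogonal_matrix_def)
  have inv: "Q ** matrix_inv Q = mat 1 \<and> matrix_inv Q ** Q = mat 1"
    unfolding matrix_inv_def by (rule someI_ex[OF ex])
  have o: "Q ** transpose Q = mat 1" using assms by (simp add: orthogonal_matrix_def)
  have "matrix_inv Q = matrix_inv Q ** (Q ** transpose Q)" by (simp add: o)
  also have "\<dots> = (matrix_inv Q ** Q) ** transpose Q" by (simp add: matrix_mul_assoc)
  also have "\<dots> = transpose Q" using inv by simp
  finally show ?thesis .
qed



lemma SO_iff: "Q \<in> SO \<longleftrightarrow> orthogonal_matrix Q \<and> det Q = 1"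
  by (simp add: SO_def)

lemma SO_mul: "A \<in> SO \<Longrightarrow> B \<in> SO \<Longrightarrow> A ** B \<in> SO"
  by (simp add: SO_def orthogonal_matrix_mul det_mul)

lemma SO_transpose: "A \<in> SO \<Longrightarrow> transpose A \<in> SO"
  by (simp add: SO_def)

lemma SO_one: "mat 1 \<in> SO"
  by (simp add: SO_def orthogonal_matrix_id)



lemma SO_in_G:
  fixes G :: "(real^'n^'n) set"
  assumes card: "CARD('n) \<ge> 3"
    and mul: "\<And>A B. A \<in> G \<Longrightarrow> B \<in> G \<Longrightarrow> A ** B \<in> G"
    and one: "mat 1 \<in> G"
    and comm: "\<And>A B. orthogonal_matrix A \<Longrightarrow> det A = 1 \<Longrightarrow> orthogonal_matrix B \<Longrightarrow> det B = 1
       \<Longrightarrow> A ** B ** transpose A ** transpose B \<in> G"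
    and detG: "\<And>M. M \<in> G \<Longrightarrow> det M \<ge> 0"
    and Q: "orthogonal_matrix Q" "det Q = 1"
  shows "Q \<in> G"
proof -
  obtain k :: 'n where True by simp
  obtain xs where xs: "Q = rprod xs" using cd_decomp[OF Q(1)] by blast
  have rr: "hrefl u ** hrefl v \<in> G" if "u \<noteq> 0" "v \<noteq> 0" for u v :: "real^'n"
    by (rule commutator_refl[OF card comm one that])
  have "rprod xs \<in> G \<or> hrefl (axis k 1) ** rprod xs \<in> G"
    by (rule parity[OF mul one rr]) simp_all
  moreover have "det (hrefl (axis k 1) ** Q) = -1"
    using Q by (simp add: det_mul det_hrefl_axis)
  ultimately show ?thesis using xs detG by force
qed

lemma det_smul: "det (c *\<^sub>R (A::real^'n^'n)) = c ^ CARD('n) * det A"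
proof -
  have "c *\<^sub>R A = mat c ** A"
    by (simp add: vec_eq_iff matrix_matrix_mult_def mat_def if_distrib if_distribR sum.delta cong: if_cong)
  moreover have "det (mat c :: real^'n^'n) = c ^ CARD('n)"
    by (simp add: det_diagonal mat_def)
  ultimately show ?thesis by (simp add: det_mul)
qed



lemma smul_mm: "(a *\<^sub>R X) ** (b *\<^sub>R Y) = (a * b) *\<^sub>R (X ** (Y::real^'n^'n))"
  by (simp add: matrix_scalar_ac scalar_matrix_assoc[symmetric])

lemma smul_ml: "(a *\<^sub>R X) ** Y = a *\<^sub>R (X ** (Y::real^'n^'n))"
  by (simp add: scalar_matrix_assoc[symmetric])

lemma smul_mr: "X ** (b *\<^sub>R Y) = b *\<^sub>R (X ** (Y::real^'n^'n))"
  by (simp add: matrix_scalar_ac scalar_matrix_assoc[symmetric])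




definition wset :: "(real^'n^'n) set \<Rightarrow> (real^'n^'n) set" where
  "wset A = {foldr (**) xs (mat 1) | xs. xs \<noteq> [] \<and> set xs \<subseteq> A}"

lemma foldr_mm_append:
  "foldr (**) (xs @ ys) (mat 1) = foldr (**) xs (mat 1) ** foldr (**) ys (mat 1 :: real^'n^'n)"
  by (induction xs) (simp_all add: matrix_mul_assoc)

lemma wset_mul:
  assumes "a \<in> wset A" "b \<in> wset A"
  shows "a ** b \<in> wset A"
proof -
  obtain xs where xs: "a = foldr (**) xs (mat 1)" "xs \<noteq> []" "set xs \<subseteq> A"
    using assms(1) by (auto simp: wset_def)
  obtain ys where ys: "b = foldr (**) ys (mat 1)" "ys \<noteq> []" "set ys \<subseteq> A"
    using assms(2) by (auto simp: wset_def)
  have "a ** b = foldr (**) (xs @ ys) (mat 1)" using xs ys by (simp only: foldr_mm_append)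
  then show ?thesis unfolding wset_def
    by (intro CollectI exI[of _ "xs @ ys"]) (use xs ys in auto)
qed

lemma wset_single: "g \<in> A \<Longrightarrow> g \<in> wset A"
  unfolding wset_def by (intro CollectI exI[of _ "[g]"]) simp

lemma wset_cases:
  assumes "p \<in> wset A"
  obtains xs where "p = foldr (**) xs (mat 1)" "xs \<noteq> []" "set xs \<subseteq> A"
  using assms by (auto simp: wset_def)

lemma wset_inv:
  assumes inv: "\<And>g. g \<in> A \<Longrightarrow> \<exists>g'\<in>A. g' ** g = mat 1"
  shows "xs \<noteq> [] \<Longrightarrow> set xs \<subseteq> A \<Longrightarrow> \<exists>p'\<in>wset A. p' ** foldr (**) xs (mat 1) = mat 1"
proof (induction xs)
  case Nil
  then show ?case by simp
next
  case (Cons x xs)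
  obtain x' where x': "x' \<in> A" "x' ** x = mat 1" using inv Cons.prems by auto
  show ?case
  proof (cases "xs = []")
    case True
    then show ?thesis using x' wset_single by auto
  next
    case False
    then obtain p' where p': "p' \<in> wset A" "p' ** foldr (**) xs (mat 1) = mat 1"
      using Cons by auto
    have "(p' ** x') ** foldr (**) (x # xs) (mat 1) = p' ** ((x' ** x) ** foldr (**) xs (mat 1))"
      by (simp add: matrix_mul_assoc)
    also have "\<dots> = mat 1" using x' p' by simp
    finally show ?thesis using wset_mul[OF p'(1) wset_single[OF x'(1)]] by blast
  qed
qed

lemma CO_iff: "M \<in> CO \<longleftrightarrow> (\<exists>c Q. M = c *\<^sub>R Q \<and> c > 0 \<and> Q \<in> SO)"
  by (auto simp: CO_def)

lemma CO_mul: "a \<in> CO \<Longrightarrow> b \<in> CO \<Longrightarrow> a ** b \<in> CO"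
  unfolding CO_iff using SO_mul smul_mm by (metis mult_pos_pos)

lemma CO_one: "mat 1 \<in> CO"
  unfolding CO_iff using SO_one by (metis scaleR_one zero_less_one)

lemma wset_CO:
  assumes "A \<subseteq> CO"
  shows "wset A \<subseteq> CO"
proof
  fix p assume "p \<in> wset A"
  then obtain xs where xs: "p = foldr (**) xs (mat 1)" "set xs \<subseteq> A" by (auto elim: wset_cases)
  have "set xs \<subseteq> A \<Longrightarrow> foldr (**) xs (mat 1) \<in> CO" for xs
    by (induction xs) (use assms CO_one CO_mul in auto)
  then show "p \<in> CO" using xs by simp
qed

lemma det_CO: "M \<in> CO \<Longrightarrow> det M > 0"
  unfolding CO_iff by (auto simp: det_smul SO_def)

lemma closure_det:
  assumes "S \<subseteq> CO" "x \<in> closure S"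
  shows "det x \<ge> 0"
proof -
  from assms(2) obtain f where f: "\<forall>n. f n \<in> S" "f \<longlonglongrightarrow> x" by (auto simp: closure_sequential)
  have "(\<lambda>n. det (f n)) \<longlonglongrightarrow> det x" by (intro tendsto_det f)
  moreover have "\<forall>n. det (f n) \<ge> 0" using f assms(1) det_CO by (meson less_imp_le subsetD)
  ultimately show ?thesis by (meson LIMSEQ_le_const)
qed

definition finv :: "real^'n^'n \<Rightarrow> real^'n^'n" where
  "finv M = inverse ((transpose M ** M) $ (SOME k. True) $ (SOME k. True)) *\<^sub>R transpose M"

lemma tM_CO:
  assumes "Q \<in> SO"
  shows "transpose (c *\<^sub>R Q) ** (c *\<^sub>R Q) = (c * c) *\<^sub>R mat 1"
  using assms by (simp add: SO_def orthogonal_matrix transpose_scalar smul_mm)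

lemma finv_CO:
  assumes "Q \<in> SO" "c > 0"
  shows "finv (c *\<^sub>R Q) = inverse c *\<^sub>R transpose Q"
  unfolding finv_def
  apply (subst tM_CO[OF assms(1)])
  using assms by (simp add: mat_def transpose_scalar field_simps)

lemma finv_left: "Q \<in> SO \<Longrightarrow> c > 0 \<Longrightarrow> finv (c *\<^sub>R Q) ** (c *\<^sub>R Q) = mat 1"
  by (simp add: finv_CO smul_mm SO_def orthogonal_matrix)

lemma finv_right: "Q \<in> SO \<Longrightarrow> c > 0 \<Longrightarrow> (c *\<^sub>R Q) ** finv (c *\<^sub>R Q) = mat 1"
  by (simp add: finv_CO smul_mm SO_def orthogonal_matrix_def)

lemma wset_finv:
  assumes AC: "A \<subseteq> CO" and inv: "\<And>g. g \<in> A \<Longrightarrow> \<exists>g'\<in>A. g' ** g = mat 1"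
    and p: "p \<in> wset A"
  shows "finv p \<in> wset A"
proof -
  obtain xs where xs: "p = foldr (**) xs (mat 1)" "xs \<noteq> []" "set xs \<subseteq> A"
    using p by (auto elim: wset_cases)
  obtain p' where p': "p' \<in> wset A" "p' ** p = mat 1" using wset_inv[OF inv xs(2,3)] xs(1) by blast
  have "p \<in> CO" using wset_CO[OF AC] p by blast
  then obtain c Q where cQ: "p = c *\<^sub>R Q" "c > 0" "Q \<in> SO" by (auto simp: CO_iff)
  have "p' = p' ** (p ** finv p)" using finv_right[OF cQ(3,2)] cQ(1) by simp
  also have "\<dots> = finv p" by (simp add: matrix_mul_assoc p'(2))
  finally show ?thesis using p' by simp
qed

lemma closure_finv:
  fixes Q :: "real^'n^'n"
  assumes AC: "A \<subseteq> CO" and inv: "\<And>g. g \<in> A \<Longrightarrow> \<exists>g'\<in>A. g' ** g = mat 1"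
    and x: "c *\<^sub>R Q \<in> closure (wset A)" and Q: "Q \<in> SO" and c: "c > 0"
  shows "inverse c *\<^sub>R transpose Q \<in> closure (wset A)"
proof -
  define k :: 'n where "k = (SOME k. True)"
  from x obtain f where f: "\<forall>n. f n \<in> wset A" "f \<longlonglongrightarrow> c *\<^sub>R Q" by (auto simp: closure_sequential)
  have fi: "\<forall>n. finv (f n) \<in> wset A" using f(1) wset_finv[OF AC inv] by blast
  have nz: "(transpose (c *\<^sub>R Q) ** (c *\<^sub>R Q)) $ k $ k \<noteq> 0"
    using Q c by (simp add: tM_CO mat_def)
  have lim: "(\<lambda>n. finv (f n)) \<longlonglongrightarrow> finv (c *\<^sub>R Q)"
    unfolding finv_def k_def[symmetric]
    by (intro tendsto_scaleR tendsto_inverse tendsto_vec_nth tendsto_mmult tendsto_transpose f(2) nz)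
  have "finv (c *\<^sub>R Q) \<in> closure (wset A)"
    unfolding closure_sequential by (intro exI[of _ "\<lambda>n. finv (f n)"]) (use fi lim in simp)
  then show ?thesis using finv_CO[OF Q c] by simp
qed



lemma lift_SO:
  assumes "\<And>w. w \<in> W \<Longrightarrow> \<exists>c>0. c *\<^sub>R w \<in> A"
  shows "xs \<noteq> [] \<Longrightarrow> set xs \<subseteq> W \<Longrightarrow> \<exists>c>0. c *\<^sub>R foldr (**) xs (mat 1) \<in> wset A"
proof (induction xs)
  case Nil
  then show ?case by simp
next
  case (Cons x xs)
  obtain c0 where c0: "c0 > 0" "c0 *\<^sub>R x \<in> A" using assms Cons.prems by auto
  show ?case
  proof (cases "xs = []")
    case True
    then show ?thesis using c0 wset_single by auto
  next
    case False
    then obtain c where c: "c > 0" "c *\<^sub>R foldr (**) xs (mat 1) \<in> wset A" using Cons by auto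
    have "(c0 *\<^sub>R x) ** (c *\<^sub>R foldr (**) xs (mat 1)) = (c0 * c) *\<^sub>R foldr (**) (x # xs) (mat 1)"
      by (simp add: smul_mm)
    then show ?thesis using wset_mul[OF wset_single[OF c0(2)] c(2)] c0(1) c(1)
      by (metis mult_pos_pos)
  qed
qed


lemma lift_R:
  assumes "\<And>x. x \<in> L \<Longrightarrow> \<exists>Q\<in>SO. exp x *\<^sub>R Q \<in> A"
  shows "xs \<noteq> [] \<Longrightarrow> set xs \<subseteq> L \<Longrightarrow> \<exists>Q\<in>SO. exp (sum_list xs) *\<^sub>R Q \<in> wset A"
proof (induction xs)
  case Nil
  then show ?case by simp
next
  case (Cons x xs)
  obtain Q0 where Q0: "Q0 \<in> SO" "exp x *\<^sub>R Q0 \<in> A" using assms Cons.prems by auto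
  show ?case
  proof (cases "xs = []")
    case True
    then show ?thesis using Q0 wset_single by auto
  next
    case False
    then obtain Q where Q: "Q \<in> SO" "exp (sum_list xs) *\<^sub>R Q \<in> wset A" using Cons by auto
    have "(exp x *\<^sub>R Q0) ** (exp (sum_list xs) *\<^sub>R Q) = exp (sum_list (x # xs)) *\<^sub>R (Q0 ** Q)"
      by (simp add: smul_mm exp_add)
    then show ?thesis using wset_mul[OF wset_single[OF Q0(2)] Q(2)] SO_mul[OF Q0(1) Q(1)]
      by metis
  qed
qed


lemma scale_shift:
  fixes C :: "(real^'n^'n) set"
  assumes t: "t > 1" and pw1: "\<And>m. (t ^ m) *\<^sub>R mat 1 \<in> C"
    and pw2: "\<And>m. (inverse t ^ m) *\<^sub>R mat 1 \<in> C" and c: "c > 0"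
  shows "\<exists>d. d *\<^sub>R mat 1 \<in> C \<and> 1 \<le> d * c \<and> d * c \<le> t"
proof -
  define m where "m = floor (log t c)"
  define d where "d = t powr (- real_of_int m)"
  have t0: "t > 0" using t by simp
  have dC: "d *\<^sub>R mat 1 \<in> C"
  proof (cases "m \<ge> 0")
    case True
    then have e: "real_of_int m = real (nat m)" by simp
    have "d = inverse (t powr real (nat m))" unfolding d_def e by (rule powr_minus)
    also have "t powr real (nat m) = t ^ nat m" using t0 by (rule powr_realpow)
    finally have "d = inverse t ^ nat m" by (simp add: power_inverse)
    then show ?thesis using pw2 by simp
  next
    case False
    then have e: "- real_of_int m = real (nat (- m))" by simp
    have "d = t powr real (nat (- m))" unfolding d_def e ..
    also have "\<dots> = t ^ nat (- m)" using t0 by (rule powr_realpow)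
    finally show ?thesis using pw1 by simp
  qed
  have cc: "t powr (log t c) = c" using t c by simp
  have "d * c = t powr (log t c - m)"
    unfolding d_def powr_diff cc powr_minus by (simp add: divide_inverse mult.commute)
  moreover have fl: "real_of_int m \<le> log t c" "log t c < real_of_int m + 1"
    unfolding m_def using floor_correct[of "log t c"] by auto
  moreover have "t powr (log t c - m) \<ge> t powr 0"
    by (rule powr_mono) (use fl t in auto)
  moreover have "t powr (log t c - m) \<le> t powr 1"
    by (rule powr_mono) (use fl t in auto)
  ultimately have "1 \<le> d * c" "d * c \<le> t"
    using t by auto
  then show ?thesis using dC by blast
qed



theorem proposition3p3:
  fixes U :: "nat \<Rightarrow> real^'d^'d" and r :: "nat \<Rightarrow> real" and n :: nat
  assumes "CARD('d) \<ge> 3"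
    and "\<forall>i\<in>{1..n}. U i \<in> SO \<and> r i > 0"
    and "mgen SO ((\<lambda>i. U i) ` {1..n} \<union> (\<lambda>i. matrix_inv (U i)) ` {1..n}) = SO"
    and "agen ((\<lambda>i. ln (r i)) ` {1..n} \<union> (\<lambda>i. - ln (r i)) ` {1..n}) = UNIV"
    and "\<exists>s>0. s \<noteq> 1 \<and> s *\<^sub>R mat 1 \<in>
           mgen CO ((\<lambda>i. r i *\<^sub>R U i) ` {1..n} \<union>
                    (\<lambda>i. inverse (r i) *\<^sub>R matrix_inv (U i)) ` {1..n})"
  shows "mgen CO ((\<lambda>i. r i *\<^sub>R U i) ` {1..n} \<union>
                  (\<lambda>i. inverse (r i) *\<^sub>R matrix_inv (U i)) ` {1..n}) = CO"
proof -
  note card = assms(1) and hU = assms(2) and h1 = assms(3) and h2 = assms(4) and h3 = assms(5)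
  define A where "A = (\<lambda>i. r i *\<^sub>R U i) ` {1..n} \<union> (\<lambda>i. inverse (r i) *\<^sub>R matrix_inv (U i)) ` {1..n}"
  define C where "C = closure (wset A)"
  have mg: "mgen CO A = CO \<inter> C" by (simp add: mgen_def C_def wset_def)
  have PC: "p \<in> C" if "p \<in> wset A" for p using that closure_subset unfolding C_def by blast
  have clC: "closed C" unfolding C_def by simp
  have minv: "matrix_inv (U i) = transpose (U i)" if "i \<in> {1..n}" for i
    using hU that by (simp add: SO_def orth_matrix_inv)
  have AC: "A \<subseteq> CO"
  proof
    fix g assume "g \<in> A"
    then obtain i where i: "i \<in> {1..n}" "g = r i *\<^sub>R U i \<or> g = inverse (r i) *\<^sub>R matrix_inv (U i)"
      unfolding A_def by blast
    have "U i \<in> SO" "r i > 0" using hU i(1) by auto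
    then show "g \<in> CO" using i(2) minv[OF i(1)] SO_transpose unfolding CO_iff
      by (metis inverse_positive_iff_positive)
  qed
  have Ainv: "\<exists>g'\<in>A. g' ** g = mat 1" if gA: "g \<in> A" for g
  proof -
    obtain i where i: "i \<in> {1..n}" "g = r i *\<^sub>R U i \<or> g = inverse (r i) *\<^sub>R matrix_inv (U i)"
      using gA unfolding A_def by blast
    have o: "transpose (U i) ** U i = mat 1" "U i ** transpose (U i) = mat 1"
      using hU i(1) by (auto simp: SO_def orthogonal_matrix_def)
    have ri: "r i > 0" using hU i(1) by auto
    from i(2) show ?thesis
    proof
      assume g: "g = r i *\<^sub>R U i"
      have "inverse (r i) *\<^sub>R matrix_inv (U i) \<in> A" using i(1) unfolding A_def by blast
      moreover have "(inverse (r i) *\<^sub>R matrix_inv (U i)) ** g = mat 1"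
        using g o ri minv[OF i(1)] by (simp add: smul_mm)
      ultimately show ?thesis by blast
    next
      assume g: "g = inverse (r i) *\<^sub>R matrix_inv (U i)"
      have "r i *\<^sub>R U i \<in> A" using i(1) unfolding A_def by blast
      moreover have "(r i *\<^sub>R U i) ** g = mat 1"
        using g o ri minv[OF i(1)] by (simp add: smul_mm)
      ultimately show ?thesis by blast
    qed
  qed
  have n1: "1 \<le> n"
  proof (rule ccontr)
    assume "\<not> 1 \<le> n"
    then have "{1..n} = {}" by simp
    then have "agen ((\<lambda>i. ln (r i)) ` {1..n} \<union> (\<lambda>i. - ln (r i)) ` {1..n}) = {}"
      by (simp add: agen_def)
    then show False using h2 by simp
  qed
  have mulC: "x ** y \<in> C" if "x \<in> C" "y \<in> C" for x y
    using closure_mul[of "wset A", OF wset_mul] that unfolding C_def by blast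
  have oneC: "mat 1 \<in> C"
  proof -
    have g: "r 1 *\<^sub>R U 1 \<in> A" using n1 unfolding A_def by auto
    obtain g' where g': "g' \<in> A" "g' ** (r 1 *\<^sub>R U 1) = mat 1" using Ainv[OF g] by blast
    have "g' ** (r 1 *\<^sub>R U 1) \<in> wset A" by (rule wset_mul[OF wset_single[OF g'(1)] wset_single[OF g]])
    then show ?thesis using g'(2) PC by simp
  qed
  have detC: "det M \<ge> 0" if "M \<in> C" for M
    using closure_det[OF wset_CO[OF AC]] that unfolding C_def by blast
  have invC: "inverse c *\<^sub>R transpose Q \<in> C" if "c *\<^sub>R Q \<in> C" "Q \<in> SO" "c > 0" for c Q
    using closure_finv[OF AC Ainv] that unfolding C_def by blast
  obtain s where s: "s > 0" "s \<noteq> 1" "s *\<^sub>R mat 1 \<in> C"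
    using h3 unfolding A_def[symmetric] mg by blast
  have sinv: "inverse s *\<^sub>R mat 1 \<in> C" using invC[of s "mat 1"] s SO_one by simp
  define t where "t = max s (inverse s)"
  have t1: "t > 1"
  proof (cases "s > 1")
    case True then show ?thesis unfolding t_def by simp
  next
    case False
    then have "s < 1" using s(2) by simp
    then have "1 < inverse s" using s(1) by (rule one_less_inverse[rotated])
    then show ?thesis unfolding t_def by simp
  qed
  have tC: "t *\<^sub>R mat 1 \<in> C" "inverse t *\<^sub>R mat 1 \<in> C"
    unfolding t_def max_def using s(3) sinv by auto
  have pw1: "(t ^ m) *\<^sub>R mat 1 \<in> C" for m
  proof (induction m)
    case 0 then show ?case using oneC by simp
  next
    case (Suc m)
    have "(t *\<^sub>R mat 1) ** ((t ^ m) *\<^sub>R mat 1) = (t ^ Suc m) *\<^sub>R (mat 1 :: real^'d^'d)"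
      by (simp add: smul_mm)
    then show ?case using mulC[OF tC(1) Suc] by simp
  qed
  have pw2: "(inverse t ^ m) *\<^sub>R mat 1 \<in> C" for m
  proof (induction m)
    case 0 then show ?case using oneC by simp
  next
    case (Suc m)
    have "(inverse t *\<^sub>R mat 1) ** ((inverse t ^ m) *\<^sub>R mat 1) = (inverse t ^ Suc m) *\<^sub>R (mat 1 :: real^'d^'d)"
      by (simp add: smul_mm)
    then show ?case using mulC[OF tC(2) Suc] by simp
  qed
  have shift: "\<exists>d. d *\<^sub>R mat 1 \<in> C \<and> 1 \<le> d * c \<and> d * c \<le> t" if "c > 0" for c
    by (rule scale_shift[OF t1 pw1 pw2 that])
  define W where "W = (\<lambda>i. U i) ` {1..n} \<union> (\<lambda>i. matrix_inv (U i)) ` {1..n}"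
  have Wlift: "\<exists>c>0. c *\<^sub>R w \<in> A" if wW: "w \<in> W" for w
  proof -
    obtain i where i: "i \<in> {1..n}" "w = U i \<or> w = matrix_inv (U i)" using wW unfolding W_def by blast
    have ri: "r i > 0" using hU i(1) by auto
    from i(2) show ?thesis
    proof
      assume "w = U i" then show ?thesis using ri i(1) unfolding A_def by blast
    next
      assume "w = matrix_inv (U i)" then show ?thesis using ri i(1) unfolding A_def
        by (intro exI[of _ "inverse (r i)"]) auto
    qed
  qed
  have psi: "\<exists>a>0. a *\<^sub>R Q \<in> C" if Q: "Q \<in> SO" for Q
  proof -
    have "Q \<in> closure (wset W)" using h1 Q unfolding W_def[symmetric] mgen_def wset_def by blast
    then obtain w where w: "\<forall>k. w k \<in> wset W" "w \<longlonglongrightarrow> Q" by (auto simp: closure_sequential)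
    have "\<exists>c>0. c *\<^sub>R w k \<in> wset A" for k
    proof -
      have wk: "w k \<in> wset W" using w(1) by blast
      obtain xs where "w k = foldr (**) xs (mat 1)" "xs \<noteq> []" "set xs \<subseteq> W"
        using wk by (rule wset_cases)
      then show ?thesis using lift_SO[OF Wlift] by metis
    qed
    then obtain c where c: "\<forall>k. c k > 0 \<and> c k *\<^sub>R w k \<in> wset A" by metis
    then have "\<forall>k. \<exists>d. d *\<^sub>R mat 1 \<in> C \<and> 1 \<le> d * c k \<and> d * c k \<le> t" using shift by blast
    then obtain d where d: "\<forall>k. d k *\<^sub>R mat 1 \<in> C \<and> 1 \<le> d k * c k \<and> d k * c k \<le> t" by metis
    define a where "a k = d k * c k" for k
    have qC: "a k *\<^sub>R w k \<in> C" for k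
    proof -
      have "(d k *\<^sub>R mat 1) ** (c k *\<^sub>R w k) \<in> C" using d c mulC PC by blast
      then show ?thesis by (simp add: a_def smul_mm)
    qed
    have "seq_compact {1..t}" by (rule compact_imp_seq_compact) simp
    moreover have "\<forall>k. a k \<in> {1..t}" using d unfolding a_def by auto
    ultimately obtain l \<phi> where l: "l \<in> {1..t}" "strict_mono \<phi>" "(a \<circ> \<phi>) \<longlonglongrightarrow> l"
      by (rule seq_compactE)
    have "(\<lambda>k. a (\<phi> k) *\<^sub>R w (\<phi> k)) \<longlonglongrightarrow> l *\<^sub>R Q"
      using tendsto_scaleR[OF l(3)[unfolded comp_def] LIMSEQ_subseq_LIMSEQ[OF w(2) l(2), unfolded comp_def]] .
    then have "l *\<^sub>R Q \<in> C" by (rule closed_sequentially[OF clC qC])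
    then show ?thesis using l(1) by (intro exI[of _ l]) auto
  qed
  have comm: "A1 ** B1 ** transpose A1 ** transpose B1 \<in> C"
    if "orthogonal_matrix A1" "det A1 = 1" "orthogonal_matrix B1" "det B1 = 1" for A1 B1 :: "real^'d^'d"
  proof -
    have SA: "A1 \<in> SO" "B1 \<in> SO" using that by (simp_all add: SO_def)
    obtain a where a: "a > 0" "a *\<^sub>R A1 \<in> C" using psi[OF SA(1)] by blast
    obtain b where b: "b > 0" "b *\<^sub>R B1 \<in> C" using psi[OF SA(2)] by blast
    have ai: "inverse a *\<^sub>R transpose A1 \<in> C" using invC[OF a(2) SA(1) a(1)] .
    have bi: "inverse b *\<^sub>R transpose B1 \<in> C" using invC[OF b(2) SA(2) b(1)] .
    have "(a *\<^sub>R A1) ** (b *\<^sub>R B1) ** (inverse a *\<^sub>R transpose A1) ** (inverse b *\<^sub>R transpose B1) \<in> C"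
      using mulC a b ai bi by blast
    moreover have "(a *\<^sub>R A1) ** (b *\<^sub>R B1) ** (inverse a *\<^sub>R transpose A1) ** (inverse b *\<^sub>R transpose B1)
        = A1 ** B1 ** transpose A1 ** transpose B1"
    proof -
      have ai1: "a * inverse a = 1" "b * inverse b = 1" using a(1) b(1) by auto
      have "a * b * inverse a * inverse b = (a * inverse a) * (b * inverse b)" by (simp only: mult_ac)
      then have one: "a * b * inverse a * inverse b = 1" unfolding ai1 by simp
      have "(a *\<^sub>R A1) ** (b *\<^sub>R B1) ** (inverse a *\<^sub>R transpose A1) ** (inverse b *\<^sub>R transpose B1)
        = (a * b * inverse a * inverse b) *\<^sub>R (A1 ** B1 ** transpose A1 ** transpose B1)"
        by (simp only: smul_mm)
      then show ?thesis unfolding one by simp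
    qed
    ultimately show ?thesis by simp
  qed
  have SOC: "Q \<in> C" if QS: "Q \<in> SO" for Q
  proof (rule SO_in_G[where G=C])
    show "CARD('d) \<ge> 3" by (rule card)
    show "A ** B \<in> C" if "A \<in> C" "B \<in> C" for A B using mulC that by blast
    show "mat 1 \<in> C" by (rule oneC)
    show "A ** B ** transpose A ** transpose B \<in> C"
      if "orthogonal_matrix A" "det A = 1" "orthogonal_matrix B" "det B = 1" for A B :: "real^'d^'d"
      using comm that by blast
    show "det M \<ge> 0" if "M \<in> C" for M using detC that by blast
    show "orthogonal_matrix Q" "det Q = 1" using QS by (simp_all add: SO_def)
  qed
  define L where "L = (\<lambda>i. ln (r i)) ` {1..n} \<union> (\<lambda>i. - ln (r i)) ` {1..n}"
  have Llift: "\<exists>Q\<in>SO. exp x *\<^sub>R Q \<in> A" if xL: "x \<in> L" for x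
  proof -
    obtain i where i: "i \<in> {1..n}" "x = ln (r i) \<or> x = - ln (r i)" using xL unfolding L_def by blast
    have ri: "r i > 0" and Ui: "U i \<in> SO" using hU i(1) by auto
    from i(2) show ?thesis
    proof
      assume x: "x = ln (r i)"
      have "exp x = r i" using x ri by simp
      then show ?thesis using ri Ui i(1) unfolding A_def
        by (intro bexI[of _ "U i"]) auto
    next
      assume x: "x = - ln (r i)"
      have "exp x = inverse (r i)" using x ri by (simp add: exp_minus)
      have mem: "inverse (r i) *\<^sub>R matrix_inv (U i) \<in> A" unfolding A_def using i(1) by blast
      have so: "matrix_inv (U i) \<in> SO" using minv[OF i(1)] SO_transpose[OF Ui] by simp
      show ?thesis using mem so \<open>exp x = inverse (r i)\<close> by metis
    qed
  qed
  have scC: "c *\<^sub>R mat 1 \<in> C" if c: "c > 0" for c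
  proof -
    have "ln c \<in> closure {sum_list xs | xs. xs \<noteq> [] \<and> set xs \<subseteq> L}"
      using h2 unfolding L_def[symmetric] agen_def by blast
    then obtain \<sigma> where \<sigma>: "\<forall>k. \<sigma> k \<in> {sum_list xs | xs. xs \<noteq> [] \<and> set xs \<subseteq> L}" "\<sigma> \<longlonglongrightarrow> ln c"
      by (auto simp: closure_sequential)
    have "\<exists>Q\<in>SO. exp (\<sigma> k) *\<^sub>R Q \<in> wset A" for k
    proof -
      obtain xs where xs: "\<sigma> k = sum_list xs" "xs \<noteq> []" "set xs \<subseteq> L" using \<sigma>(1) by blast
      show ?thesis using lift_R[OF Llift xs(2,3)] unfolding xs(1) .
    qed
    then obtain Q where Q: "\<forall>k. Q k \<in> SO \<and> exp (\<sigma> k) *\<^sub>R Q k \<in> wset A" by metis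
    have e: "exp (\<sigma> k) *\<^sub>R mat 1 \<in> C" for k
    proof -
      have "(exp (\<sigma> k) *\<^sub>R Q k) ** transpose (Q k) \<in> C"
        using Q by (intro mulC PC SOC SO_transpose) auto
      moreover have "(exp (\<sigma> k) *\<^sub>R Q k) ** transpose (Q k) = exp (\<sigma> k) *\<^sub>R mat 1"
        using Q by (simp add: smul_ml SO_def orthogonal_matrix_def)
      ultimately show ?thesis by simp
    qed
    have "(\<lambda>k. exp (\<sigma> k) *\<^sub>R (mat 1 :: real^'d^'d)) \<longlonglongrightarrow> exp (ln c) *\<^sub>R mat 1"
      by (intro tendsto_intros \<sigma>(2))
    then have "exp (ln c) *\<^sub>R (mat 1 :: real^'d^'d) \<in> C" by (rule closed_sequentially[OF clC e])
    then show ?thesis using c by simp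
  qed
  have "CO \<subseteq> C"
  proof
    fix M :: "real^'d^'d" assume "M \<in> CO"
    then obtain c Q where cQ: "M = c *\<^sub>R Q" "c > 0" "Q \<in> SO" by (auto simp: CO_iff)
    then have "M = (c *\<^sub>R mat 1) ** Q" by (simp add: smul_ml)
    then show "M \<in> C" using mulC[OF scC[OF cQ(2)] SOC[OF cQ(3)]] by simp
  qed
  then show ?thesis unfolding A_def[symmetric] mg by blast
qed


end
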